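(* Let $n\ge1$ and $\alpha\ge0$. There is a constant $C>0$ such that for all $k\in\mathbb N$ and all $f\in L^2(\mathbb R^n)$, $$k^{\alpha/4}\|\chi_{[k,k+1)}(H)f\|_{L^2(\mathbb R^n)}\le C\|\chi_{[k,k+1)}(H)f\|_{L^2(\mathbb R^n,(1+|x|)^\alpha dx)}.$$
   Context: $H=-\Delta+|x|^2$ on $\mathbb R^n$, with orthonormal eigenbasis of Hermite functions $\Phi_\mu(x)=\prod_ih_{\mu_i}(x_i)$, $\mu\in\mathbb N_0^n$, $H\Phi_\mu=(2|\mu|+n)\Phi_\mu$ ($h_k$ the one-dimensional Hermite functions). For $E\subset\mathbb R$, $\chi_E(H)f=\sum_{\mu:\,2|\mu|+n\in E}\langle f,\Phi_\mu\rangle\Phi_\mu$. *)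

theory Defs
  imports "HOL-Analysis.Analysis"
begin

fun hermite_poly :: "nat \<Rightarrow> real \<Rightarrow> real" where
  "hermite_poly 0 x = 1"
| "hermite_poly (Suc 0) x = 2 * x"
| "hermite_poly (Suc (Suc k)) x = 2 * x * hermite_poly (Suc k) x - 2 * real (Suc k) * hermite_poly k x"

definition hermite_fun :: "nat \<Rightarrow> real \<Rightarrow> real" where
  "hermite_fun k x = hermite_poly k x * exp (- (x ^ 2) / 2) / sqrt (2 ^ k * fact k * sqrt pi)"

definition hermite_nd :: "('n::finite \<Rightarrow> nat) \<Rightarrow> real ^ 'n \<Rightarrow> real" where
  "hermite_nd \<mu> x = (\<Prod>i\<in>UNIV. hermite_fun (\<mu> i) (x $ i))"

definition mi_abs :: "('n::finite \<Rightarrow> nat) \<Rightarrow> nat" where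
  "mi_abs \<mu> = (\<Sum>i\<in>UNIV. \<mu> i)"

text \<open>Eigenvalue 2|mu| + n of the Hermite operator on Phi_mu.\<close>
definition herm_eig :: "('n::finite \<Rightarrow> nat) \<Rightarrow> real" where
  "herm_eig \<mu> = 2 * real (mi_abs \<mu>) + real CARD('n)"

definition L2 :: "(real ^ 'n::finite \<Rightarrow> complex) set" where
  "L2 = {f. f \<in> borel_measurable lborel \<and> integrable lborel (\<lambda>x. (cmod (f x))\<^sup>2)}"

text \<open>L^2 inner product <f, Phi_mu> (Phi_mu is real valued).\<close>
definition herm_coeff :: "(real ^ 'n::finite \<Rightarrow> complex) \<Rightarrow> ('n \<Rightarrow> nat) \<Rightarrow> complex" where
  "herm_coeff f \<mu> = (LINT x|lborel. f x * complex_of_real (hermite_nd \<mu> x))"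

text \<open>Spectral projection chi_E(H) f = sum over mu with 2|mu|+n in E.
  Used only for bounded E, where the index set is finite.\<close>
definition spec_proj :: "real set \<Rightarrow> (real ^ 'n::finite \<Rightarrow> complex) \<Rightarrow> real ^ 'n \<Rightarrow> complex" where
  "spec_proj E f x = (\<Sum>\<mu>\<in>{\<mu>::'n \<Rightarrow> nat. herm_eig \<mu> \<in> E}.
       herm_coeff f \<mu> * complex_of_real (hermite_nd \<mu> x))"

definition L2_norm :: "(real ^ 'n::finite \<Rightarrow> complex) \<Rightarrow> real" where
  "L2_norm g = sqrt (LINT x|lborel. (cmod (g x))\<^sup>2)"

definition L2_weighted_norm :: "real \<Rightarrow> (real ^ 'n::finite \<Rightarrow> complex) \<Rightarrow> real" where
  "L2_weighted_norm \<alpha> g = sqrt (LINT x|lborel. (cmod (g x))\<^sup>2 * (1 + norm x) powr \<alpha>)"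

end

theory Submission
  imports Defs "HOL-Probability.Probability" "HOL-Real_Asymp.Real_Asymp"
begin
lemma hp_rec: "hermite_poly (Suc k) x = 2 * x * hermite_poly k x - 2 * real k * hermite_poly (k - 1) x"
  by (cases k) auto

lemma hp_deriv: "(hermite_poly k has_real_derivative (2 * real k * hermite_poly (k - 1) x)) (at x)"
proof (induction k x rule: hermite_poly.induct)
  case (1 x) then show ?case by simp
next
  case (2 x) then show ?case by (auto intro!: derivative_eq_intros)
next
  case (3 k x)
  have "((\<lambda>x. 2 * x * hermite_poly (Suc k) x - 2 * real (Suc k) * hermite_poly k x) has_real_derivative
      (2 * hermite_poly (Suc k) x + 2 * x * (2 * real (Suc k) * hermite_poly k x)
        - 2 * real (Suc k) * (2 * real k * hermite_poly (k - 1) x))) (at x)"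
    using 3 by (auto intro!: derivative_eq_intros)
  moreover have "2 * hermite_poly (Suc k) x + 2 * x * (2 * real (Suc k) * hermite_poly k x)
        - 2 * real (Suc k) * (2 * real k * hermite_poly (k - 1) x)
     = 2 * real (Suc (Suc k)) * hermite_poly (Suc (Suc k) - 1) x"
    by (simp add: hp_rec algebra_simps)
  ultimately show ?case by simp
qed

lemma hp_cont: "continuous_on UNIV (hermite_poly k)"
  using hp_deriv DERIV_isCont continuous_at_imp_continuous_on by blast

lemma hp_cont' [continuous_intros]: "continuous_on S f \<Longrightarrow> continuous_on S (\<lambda>x. hermite_poly k (f x))"
  by (rule continuous_on_compose2[OF hp_cont _ subset_UNIV])

definition pb :: "(real \<Rightarrow> real) \<Rightarrow> bool" where
  "pb q \<longleftrightarrow> (\<exists>A N. \<forall>x. \<bar>q x\<bar> \<le> A * (1 + x^2) ^ N)"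

lemma pbE:
  assumes "pb q" obtains A N where "A \<ge> 0" "\<And>x. \<bar>q x\<bar> \<le> A * (1 + x^2) ^ N"
proof -
  obtain A N where h: "\<And>x. \<bar>q x\<bar> \<le> A * (1 + x^2) ^ N" using assms unfolding pb_def by blast
  have "0 \<le> A * (1 + 0^2) ^ N" using h[of 0] by linarith
  then have "A \<ge> 0" by simp
  with h that show ?thesis by blast
qed

lemma pow_mono_1p: "N \<le> M \<Longrightarrow> (1 + x^2::real) ^ N \<le> (1 + x^2) ^ M"
  by (rule power_increasing) auto

lemma pb_const: "pb (\<lambda>x. c)"
  unfolding pb_def by (rule exI[of _ "\<bar>c\<bar>"], rule exI[of _ 0]) simp

lemma absle: "\<bar>x::real\<bar> \<le> 1 + x^2"
proof -
  have "0 \<le> (\<bar>x\<bar> - 1)^2" by simp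
  moreover have "\<bar>x\<bar> * \<bar>x\<bar> = x * x" by (rule abs_mult_self_eq)
  ultimately have "2 * \<bar>x\<bar> \<le> 1 + x^2" by (simp add: power2_eq_square algebra_simps)
  then show ?thesis by simp
qed

lemma pb_id: "pb (\<lambda>x. x)"
  unfolding pb_def using absle by (intro exI[of _ 1] exI[of _ 1]) simp

lemma pb_mult: assumes "pb p" "pb q" shows "pb (\<lambda>x. p x * q x)"
proof -
  obtain A N where A: "A \<ge> 0" "\<And>x. \<bar>p x\<bar> \<le> A * (1 + x^2) ^ N" using pbE[OF assms(1)] by blast
  obtain B M where B: "B \<ge> 0" "\<And>x. \<bar>q x\<bar> \<le> B * (1 + x^2) ^ M" using pbE[OF assms(2)] by blast
  have "\<bar>p x * q x\<bar> \<le> (A * B) * (1 + x^2) ^ (N + M)" for x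
  proof -
    have "\<bar>p x * q x\<bar> = \<bar>p x\<bar> * \<bar>q x\<bar>" by (simp add: abs_mult)
    also have "\<dots> \<le> (A * (1 + x^2) ^ N) * (B * (1 + x^2) ^ M)"
      by (intro mult_mono A B) (use A(1) in auto)
    also have "\<dots> = (A * B) * (1 + x^2) ^ (N + M)" by (simp add: power_add)
    finally show ?thesis .
  qed
  then show ?thesis unfolding pb_def by blast
qed

lemma pb_add: assumes "pb p" "pb q" shows "pb (\<lambda>x. p x + q x)"
proof -
  obtain A N where A: "A \<ge> 0" "\<And>x. \<bar>p x\<bar> \<le> A * (1 + x^2) ^ N" using pbE[OF assms(1)] by blast
  obtain B M where B: "B \<ge> 0" "\<And>x. \<bar>q x\<bar> \<le> B * (1 + x^2) ^ M" using pbE[OF assms(2)] by blast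
  have "\<bar>p x + q x\<bar> \<le> (A + B) * (1 + x^2) ^ (N + M)" for x
  proof -
    have "\<bar>p x + q x\<bar> \<le> \<bar>p x\<bar> + \<bar>q x\<bar>" by simp
    also have "\<dots> \<le> A * (1 + x^2) ^ (N + M) + B * (1 + x^2) ^ (N + M)"
      by (intro add_mono order.trans[OF A(2)] order.trans[OF B(2)] mult_left_mono pow_mono_1p A B) auto
    finally show ?thesis by (simp add: algebra_simps)
  qed
  then show ?thesis unfolding pb_def by blast
qed

lemma pb_abs: "pb p \<Longrightarrow> pb (\<lambda>x. \<bar>p x\<bar>)"
  unfolding pb_def by simp

lemma pb_diff: assumes "pb p" "pb q" shows "pb (\<lambda>x. p x - q x)"
  using pb_add[OF assms(1) pb_mult[OF pb_const[of "-1"] assms(2)]] by simp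

lemma pb_power: "pb p \<Longrightarrow> pb (\<lambda>x. p x ^ n)"
  by (induction n) (auto intro: pb_const pb_mult)

lemma pb_hp2: "pb (hermite_poly k) \<and> pb (hermite_poly (Suc k))"
proof (induction k)
  case 0 then show ?case using pb_const[of 1] pb_mult[OF pb_const[of 2] pb_id] by simp
next
  case (Suc k)
  have "pb (\<lambda>x. 2 * x * hermite_poly (Suc k) x - 2 * real (Suc k) * hermite_poly k x)"
    using Suc by (intro pb_diff pb_mult pb_const pb_id) auto
  then show ?case using Suc by simp
qed

lemma pb_hp: "pb (hermite_poly k)" using pb_hp2 by blast

lemma exp_power_bound:
  assumes "s \<ge> 0" shows "s ^ N \<le> (real N) ^ N * exp s"
proof (cases "N = 0")
  case True then show ?thesis using assms by simp
next
  case False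
  have "(1 + s / real N) ^ N \<le> exp s"
    by (rule exp_ge_one_plus_x_over_n_power_n) (use assms False in auto)
  moreover have "(s / real N) ^ N \<le> (1 + s / real N) ^ N"
    by (rule power_mono) (use assms in auto)
  ultimately have "(s / real N) ^ N \<le> exp s" by linarith
  then show ?thesis using False by (simp add: power_divide field_simps)
qed

lemma poly_gauss_bound:
  "(1 + x^2) ^ N * exp (- (x^2) / 2) \<le> (2 * real N) ^ N * exp (1/2)"
proof -
  have "((1 + x^2) / 2) ^ N \<le> (real N) ^ N * exp ((1 + x^2) / 2)"
    by (rule exp_power_bound) (simp add: add_nonneg_nonneg)
  then have "(1 + x^2) ^ N \<le> 2 ^ N * (real N) ^ N * exp ((1 + x^2) / 2)"
    by (simp add: power_divide field_simps)
  then have "(1 + x^2) ^ N * exp (- (x^2) / 2) \<le> 2 ^ N * (real N) ^ N * exp ((1 + x^2) / 2) * exp (- (x^2) / 2)"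
    by (simp add: mult_right_mono)
  also have "\<dots> = (2 * real N) ^ N * exp (1/2)"
  proof -
    have "exp ((1 + x^2) / 2) * exp (- (x^2) / 2) = exp (1/2)"
      by (subst exp_add[symmetric]) (simp add: field_simps)
    then show ?thesis by (simp add: power_mult_distrib mult.assoc)
  qed
  finally show ?thesis .
qed

lemma integrable_half_gauss: "integrable lborel (\<lambda>x::real. exp (- (x^2) / 2))"
proof -
  have "integrable lborel (\<lambda>x. sqrt (2 * pi) * std_normal_density x)" by simp
  moreover have "sqrt (2 * pi) * std_normal_density x = exp (- (x^2) / 2)" for x
    by (simp add: std_normal_density_def)
  ultimately show ?thesis by simp
qed

lemma pb_gauss_bound:
  assumes "pb q" obtains B where "\<And>x. \<bar>q x * exp (- (x^2))\<bar> \<le> B * exp (- (x^2) / 2)"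
proof -
  obtain A N where A: "A \<ge> 0" "\<And>x. \<bar>q x\<bar> \<le> A * (1 + x^2) ^ N" using pbE[OF assms] by blast
  have "\<bar>q x * exp (- (x^2))\<bar> \<le> (A * ((2 * real N) ^ N * exp (1/2))) * exp (- (x^2) / 2)" for x
  proof -
    have e: "exp (- (x^2)) = exp (- (x^2) / 2) * exp (- (x^2) / 2)" by (simp add: exp_add[symmetric])
    have "\<bar>q x * exp (- (x^2))\<bar> = \<bar>q x\<bar> * exp (- (x^2))" by (simp add: abs_mult)
    also have "\<dots> \<le> A * (1 + x^2) ^ N * exp (- (x^2))" by (intro mult_right_mono A) auto
    also have "\<dots> = A * ((1 + x^2) ^ N * exp (- (x^2) / 2)) * exp (- (x^2) / 2)" by (simp add: e)
    also have "\<dots> \<le> A * ((2 * real N) ^ N * exp (1/2)) * exp (- (x^2) / 2)"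
      by (intro mult_right_mono mult_left_mono poly_gauss_bound A) auto
    finally show ?thesis .
  qed
  then show ?thesis using that by blast
qed

lemma pb_gauss_integrable:
  assumes "pb q" "continuous_on UNIV q"
  shows "integrable lborel (\<lambda>x. q x * exp (- (x^2)))"
proof -
  obtain B where B: "\<And>x. \<bar>q x * exp (- (x^2))\<bar> \<le> B * exp (- (x^2) / 2)" using pb_gauss_bound[OF assms(1)] by blast
  show ?thesis
  proof (rule Bochner_Integration.integrable_bound)
    show "integrable lborel (\<lambda>x. B * exp (- (x^2) / 2))" using integrable_half_gauss by simp
    show "(\<lambda>x. q x * exp (- (x^2))) \<in> borel_measurable lborel"
    proof -
      have [measurable]: "q \<in> borel_measurable borel" by (rule borel_measurable_continuous_onI[OF assms(2)])
      show ?thesis by measurable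
    qed
    show "AE x in lborel. norm (q x * exp (- (x^2))) \<le> norm (B * exp (- (x^2) / 2))"
      by (intro AE_I2) (metis B abs_ge_self order_trans real_norm_def)
  qed
qed

lemma pb_gauss_lim:
  assumes "pb q"
  shows "((\<lambda>x. q x * exp (- (x^2))) \<longlongrightarrow> 0) at_top" "((\<lambda>x. q x * exp (- (x^2))) \<longlongrightarrow> 0) at_bot"
proof -
  obtain B where B: "\<And>x. \<bar>q x * exp (- (x^2))\<bar> \<le> B * exp (- (x^2) / 2)" using pb_gauss_bound[OF assms(1)] by blast
  have l1: "((\<lambda>x::real. B * exp (- (x^2) / 2)) \<longlongrightarrow> 0) at_top" by (intro tendsto_mult_right_zero) real_asymp
  have l2: "((\<lambda>x::real. B * exp (- (x^2) / 2)) \<longlongrightarrow> 0) at_bot" by (intro tendsto_mult_right_zero) real_asymp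
  show "((\<lambda>x. q x * exp (- (x^2))) \<longlongrightarrow> 0) at_top"
    by (rule Lim_null_comparison[OF _ l1], intro always_eventually allI) (simp only: real_norm_def B)
  show "((\<lambda>x. q x * exp (- (x^2))) \<longlongrightarrow> 0) at_bot"
    by (rule Lim_null_comparison[OF _ l2], intro always_eventually allI) (simp only: real_norm_def B)
qed

definition P :: "nat \<Rightarrow> nat \<Rightarrow> real" where
  "P j k = (\<integral>x. hermite_poly j x * hermite_poly k x * exp (- (x^2)) \<partial>lborel)"

lemma hh_int: "integrable lborel (\<lambda>x. hermite_poly j x * hermite_poly k x * exp (- (x^2)))"
  by (rule pb_gauss_integrable) (auto intro!: pb_mult pb_hp continuous_intros)

lemma P_sym: "P j k = P k j"
  unfolding P_def by (simp add: mult.commute)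

lemma gauss_int: "(\<integral>x. exp (- (x^2)) \<partial>lborel) = sqrt pi"
proof -
  have e: "normal_density 0 (1 / sqrt 2) x = exp (- (x^2)) / sqrt pi" for x
    by (simp add: normal_density_def power_divide)
  have "integral\<^sup>L lborel (normal_density 0 (1 / sqrt 2)) = 1"
    by (rule integral_normal_density) simp
  moreover have "normal_density 0 (1 / sqrt 2) = (\<lambda>x. exp (- (x^2)) / sqrt pi)"
    using e by auto
  ultimately have h: "(\<integral>x. exp (- (x^2)) / sqrt pi \<partial>lborel) = 1" by metis
  have h2: "(\<integral>x. exp (- (x^2)) / sqrt pi \<partial>lborel) = (\<integral>x. exp (- (x^2)) \<partial>lborel) / sqrt pi"
    by (rule integral_divide_zero)
  have "(\<integral>x. exp (- (x^2)) \<partial>lborel) = ((\<integral>x. exp (- (x^2)) \<partial>lborel) / sqrt pi) * sqrt pi"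
    by simp
  also have "\<dots> = sqrt pi" using h h2 by simp
  finally show ?thesis .
qed

lemma P_00: "P 0 0 = sqrt pi"
  unfolding P_def using gauss_int by simp

lemma P_ibp: "P j (Suc k) = 2 * real j * P (j - 1) k"
proof -
  define F where "F x = hermite_poly j x * hermite_poly k x * exp (- (x^2))" for x
  define f where "f x = 2 * real j * (hermite_poly (j - 1) x * hermite_poly k x * exp (- (x^2)))
     - hermite_poly j x * hermite_poly (Suc k) x * exp (- (x^2))" for x
  have d: "(F has_real_derivative f x) (at x)" for x
  proof -
    have "(F has_real_derivative
      (2 * real j * hermite_poly (j - 1) x * hermite_poly k x + hermite_poly j x * (2 * real k * hermite_poly (k - 1) x)) * exp (- (x^2))
       + hermite_poly j x * hermite_poly k x * (exp (- (x^2)) * (- (2 * x)))) (at x)"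
      unfolding F_def by (auto intro!: derivative_eq_intros hp_deriv)
    moreover have "(2 * real j * hermite_poly (j - 1) x * hermite_poly k x + hermite_poly j x * (2 * real k * hermite_poly (k - 1) x)) * exp (- (x^2))
       + hermite_poly j x * hermite_poly k x * (exp (- (x^2)) * (- (2 * x))) = f x"
      unfolding f_def by (simp add: hp_rec algebra_simps)
    ultimately show ?thesis by simp
  qed
  have fi: "integrable lborel f"
    unfolding f_def by (intro Bochner_Integration.integrable_diff integrable_mult_right hh_int)
  have fcon: "continuous_on UNIV f"
    unfolding f_def by (intro continuous_intros)
  have fc: "isCont f x" for x
    using fcon by (simp add: continuous_on_eq_continuous_at)
  have pbq: "pb (\<lambda>x. hermite_poly j x * hermite_poly k x)" by (rule pb_mult[OF pb_hp pb_hp])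
  have Feq: "F = (\<lambda>x. (hermite_poly j x * hermite_poly k x) * exp (- (x^2)))"
    unfolding F_def by (simp add: fun_eq_iff)
  have lim1: "(F \<longlongrightarrow> 0) at_top" "(F \<longlongrightarrow> 0) at_bot"
    unfolding Feq by (rule pb_gauss_lim[OF pbq])+
  have "(LBINT x=-\<infinity>..\<infinity>. f x) = 0 - 0"
  proof (rule interval_integral_FTC_integrable)
    show "(F has_vector_derivative f x) (at x)" for x
      using d by (simp add: has_real_derivative_iff_has_vector_derivative)
    show "set_integrable lborel (einterval (- \<infinity>) \<infinity>) f"
      using fi by (simp add: set_integrable_def)
    show "((F \<circ> real_of_ereal) \<longlongrightarrow> 0) (at_right (- \<infinity>))"
      using lim1 by (simp add: ereal_tendsto_simps1)
    show "((F \<circ> real_of_ereal) \<longlongrightarrow> 0) (at_left \<infinity>)"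
      using lim1 by (simp add: ereal_tendsto_simps1)
    show "- \<infinity> < (\<infinity>::ereal)" by simp
    show "isCont f x" for x by (rule fc)
  qed
  then have "(\<integral>x. f x \<partial>lborel) = 0"
    by (simp add: interval_lebesgue_integral_def set_lebesgue_integral_def)
  moreover have "(\<integral>x. f x \<partial>lborel) = 2 * real j * P (j - 1) k - P j (Suc k)"
    unfolding f_def P_def
    by (subst Bochner_Integration.integral_diff) (auto intro!: hh_int integrable_mult_right)
  ultimately show ?thesis by simp
qed

lemma P_orth: "P j k = (if j = k then 2 ^ k * fact k * sqrt pi else 0)"
proof (induction k arbitrary: j)
  case 0
  show ?case
  proof (cases j)
    case 0 then show ?thesis using P_00 by simp
  next
    case (Suc j') then show ?thesis using P_ibp[of 0 j'] P_sym[of j 0] by simp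
  qed
next
  case (Suc k)
  show ?case
  proof (cases j)
    case 0 then show ?thesis using P_ibp[of 0 k] by simp
  next
    case (Suc j') then show ?thesis using P_ibp[of j k] Suc.IH[of j'] by simp
  qed
qed

definition cn :: "nat \<Rightarrow> real" where "cn a = sqrt (2 ^ a * fact a * sqrt pi)"

lemma cn_pos: "cn a > 0" unfolding cn_def by simp

lemma cn_nz[simp]: "cn a \<noteq> 0" using cn_pos[of a] by simp

lemma cn_sq: "cn a * cn a = 2 ^ a * fact a * sqrt pi"
  unfolding cn_def by simp

lemma cn_Suc: "cn (Suc a) = sqrt (2 * (real a + 1)) * cn a"
  unfolding cn_def by (simp add: real_sqrt_mult[symmetric] algebra_simps)

lemma hf_alt: "hermite_fun a x = hermite_poly a x * exp (- (x^2) / 2) / cn a"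
  unfolding hermite_fun_def cn_def by simp

lemma hf_prod: "q x * hermite_fun a x * hermite_fun b x
   = (q x * hermite_poly a x * hermite_poly b x * exp (- (x^2))) / (cn a * cn b)"
proof -
  have "exp (- (x^2) / 2) * exp (- (x^2) / 2) = exp (- (x^2))"
    by (subst exp_add[symmetric]) simp
  then show ?thesis unfolding hf_alt by (simp add: field_simps)
qed

lemma hf_cont: "continuous_on UNIV (hermite_fun a)"
  unfolding hf_alt by (intro continuous_intros) auto

lemma hf_cont' [continuous_intros]: "continuous_on S f \<Longrightarrow> continuous_on S (\<lambda>x. hermite_fun k (f x))"
  by (rule continuous_on_compose2[OF hf_cont _ subset_UNIV])

lemma hf_int:
  assumes "pb q" "continuous_on UNIV q"
  shows "integrable lborel (\<lambda>x. q x * hermite_fun a x * hermite_fun b x)"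
proof -
  have "integrable lborel (\<lambda>x. (q x * hermite_poly a x * hermite_poly b x) * exp (- (x^2)))"
    by (rule pb_gauss_integrable[OF pb_mult[OF pb_mult[OF assms(1) pb_hp] pb_hp]])
       (rule continuous_on_mult[OF continuous_on_mult[OF assms(2) hp_cont] hp_cont])
  then have "integrable lborel (\<lambda>x. (q x * hermite_poly a x * hermite_poly b x * exp (- (x^2))) / (cn a * cn b))"
    by (rule integrable_divide_zero)
  then show ?thesis by (simp only: hf_prod)
qed

lemma hf_int1: "integrable lborel (\<lambda>x. hermite_fun a x * hermite_fun b x)"
  using hf_int[OF pb_const continuous_on_const, of 1 a b] by simp

lemma hf_orth: "(\<integral>x. hermite_fun a x * hermite_fun b x \<partial>lborel) = (if a = b then 1 else 0)"
proof -
  have "(\<integral>x. hermite_fun a x * hermite_fun b x \<partial>lborel)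
     = (\<integral>x. (1 * hermite_poly a x * hermite_poly b x * exp (- (x^2))) / (cn a * cn b) \<partial>lborel)"
    using hf_prod[of "\<lambda>x. 1"] by simp
  also have "\<dots> = P a b / (cn a * cn b)" unfolding P_def by simp
  finally show ?thesis using P_orth[of a b] cn_sq[of b] cn_pos[of b] by simp
qed

definition sa :: "nat \<Rightarrow> real" where "sa a = sqrt (real a / 2)"

lemma sa_Suc_pos: "sa (Suc a) > 0" unfolding sa_def by simp

lemma sq2: "sqrt 2 * sqrt (2 + real a * 2) = 2 * sqrt (1 + real a)"
proof -
  have "sqrt (2 + real a * 2) = sqrt 2 * sqrt (1 + real a)"
    by (simp add: real_sqrt_mult[symmetric] algebra_simps)
  then show ?thesis by (simp add: mult.assoc[symmetric])
qed

lemma sq3: "sqrt (1 + real b) * sqrt (2 + real b * 2) = sqrt 2 + real b * sqrt 2"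
proof -
  have "sqrt (2 + real b * 2) = sqrt 2 * sqrt (1 + real b)"
    by (simp add: real_sqrt_mult[symmetric] algebra_simps)
  then have "sqrt (1 + real b) * sqrt (2 + real b * 2) = sqrt 2 * (sqrt (1 + real b) * sqrt (1 + real b))"
    by simp
  also have "\<dots> = sqrt 2 * (1 + real b)" by simp
  finally show ?thesis by (simp add: algebra_simps)
qed

lemma hf_rec: "x * hermite_fun a x = sa (Suc a) * hermite_fun (Suc a) x + sa a * hermite_fun (a - 1) x"
proof -
  have r: "x * hermite_poly a x = hermite_poly (Suc a) x / 2 + real a * hermite_poly (a - 1) x"
    by (simp only: hp_rec) (simp add: field_simps)
  have t1: "sa (Suc a) * hermite_fun (Suc a) x = hermite_poly (Suc a) x / 2 * exp (- (x^2) / 2) / cn a"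
  proof -
    have "sa (Suc a) / cn (Suc a) = 1 / (2 * cn a)"
      unfolding cn_Suc sa_def using cn_pos[of a]
      by (simp add: field_simps real_sqrt_divide real_sqrt_mult) (simp add: sq2)
    then show ?thesis unfolding hf_alt using sa_Suc_pos[of a] by (simp add: field_simps)
  qed
  have t2: "sa a * hermite_fun (a - 1) x = real a * hermite_poly (a - 1) x * exp (- (x^2) / 2) / cn a"
  proof (cases a)
    case 0 then show ?thesis by (simp add: sa_def)
  next
    case (Suc b)
    have e: "sa a / cn b = real a / cn a"
      unfolding Suc cn_Suc sa_def using cn_pos[of b]
      by (simp add: field_simps real_sqrt_divide real_sqrt_mult) (simp add: sq3)
    have "sa a * hermite_fun (a - 1) x = (sa a / cn b) * (hermite_poly b x * exp (- (x^2) / 2))"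
      unfolding hf_alt Suc by simp
    also have "\<dots> = real a / cn a * (hermite_poly b x * exp (- (x^2) / 2))" by (simp only: e)
    finally show ?thesis using Suc by simp
  qed
  have "x * hermite_fun a x = (x * hermite_poly a x) * exp (- (x^2) / 2) / cn a" unfolding hf_alt by simp
  also have "\<dots> = (hermite_poly (Suc a) x / 2 + real a * hermite_poly (a - 1) x) * exp (- (x^2) / 2) / cn a"
    by (simp only: r)
  also have "\<dots> = hermite_poly (Suc a) x / 2 * exp (- (x^2) / 2) / cn a
      + real a * hermite_poly (a - 1) x * exp (- (x^2) / 2) / cn a"
    by (simp add: algebra_simps add_divide_distrib)
  finally show ?thesis unfolding t1 t2 .
qed

lemma hf_int_pow: "integrable lborel (\<lambda>x. x ^ p * hermite_fun a x * hermite_fun b x)"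
  by (rule hf_int) (auto intro!: pb_power pb_id continuous_intros)

lemma hf_m2: "(\<integral>x. x^2 * hermite_fun a x * hermite_fun a x \<partial>lborel) = real a + 1/2"
proof -
  let ?u = "\<lambda>x. hermite_fun (Suc a) x" and ?v = "\<lambda>x. hermite_fun (a - 1) x"
  have "x^2 * hermite_fun a x * hermite_fun a x
     = (sa (Suc a))^2 * (?u x * ?u x) + (2 * sa (Suc a) * sa a) * (?u x * ?v x) + (sa a)^2 * (?v x * ?v x)" for x
  proof -
    have "x^2 * hermite_fun a x * hermite_fun a x = (x * hermite_fun a x)^2" by (simp add: power2_eq_square)
    also have "\<dots> = (sa (Suc a))^2 * (?u x * ?u x) + (2 * sa (Suc a) * sa a) * (?u x * ?v x) + (sa a)^2 * (?v x * ?v x)"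
      unfolding hf_rec by (simp add: power2_eq_square algebra_simps)
    finally show ?thesis .
  qed
  then have "(\<integral>x. x^2 * hermite_fun a x * hermite_fun a x \<partial>lborel)
     = (\<integral>x. (sa (Suc a))^2 * (?u x * ?u x) + (2 * sa (Suc a) * sa a) * (?u x * ?v x) + (sa a)^2 * (?v x * ?v x) \<partial>lborel)"
    by simp
  also have "\<dots> = (sa (Suc a))^2 * (\<integral>x. ?u x * ?u x \<partial>lborel) + (2 * sa (Suc a) * sa a) * (\<integral>x. ?u x * ?v x \<partial>lborel)
      + (sa a)^2 * (\<integral>x. ?v x * ?v x \<partial>lborel)"
    by (simp add: hf_int1)
  also have "\<dots> = (sa (Suc a))^2 + (sa a)^2"
    by (simp only: hf_orth) simp
  also have "\<dots> = real a + 1/2" unfolding sa_def by simp (simp add: field_simps)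
  finally show ?thesis .
qed

lemma hf_m4: "(\<integral>x. x^4 * hermite_fun a x * hermite_fun a x \<partial>lborel) \<le> 2 * (real a + 1)^2"
proof -
  let ?u = "\<lambda>x. hermite_fun (Suc a) x" and ?v = "\<lambda>x. hermite_fun (a - 1) x"
  have le: "x^4 * hermite_fun a x * hermite_fun a x
     \<le> (2 * (sa (Suc a))^2) * (x^2 * ?u x * ?u x) + (2 * (sa a)^2) * (x^2 * ?v x * ?v x)" for x
  proof -
    have "x^4 * hermite_fun a x * hermite_fun a x = x^2 * (x * hermite_fun a x)^2"
      by (simp add: power2_eq_square power4_eq_xxxx)
    also have "\<dots> = x^2 * (sa (Suc a) * ?u x + sa a * ?v x)^2" unfolding hf_rec ..
    also have "\<dots> \<le> x^2 * (2 * (sa (Suc a) * ?u x)^2 + 2 * (sa a * ?v x)^2)"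
    proof (rule mult_left_mono)
      have "0 \<le> (sa (Suc a) * ?u x - sa a * ?v x)^2" by simp
      then show "(sa (Suc a) * ?u x + sa a * ?v x)^2 \<le> 2 * (sa (Suc a) * ?u x)^2 + 2 * (sa a * ?v x)^2"
        by (simp add: power2_eq_square algebra_simps)
    qed simp
    also have "\<dots> = (2 * (sa (Suc a))^2) * (x^2 * ?u x * ?u x) + (2 * (sa a)^2) * (x^2 * ?v x * ?v x)"
      by (simp add: power2_eq_square algebra_simps)
    finally show ?thesis .
  qed
  have "(\<integral>x. x^4 * hermite_fun a x * hermite_fun a x \<partial>lborel)
     \<le> (\<integral>x. (2 * (sa (Suc a))^2) * (x^2 * ?u x * ?u x) + (2 * (sa a)^2) * (x^2 * ?v x * ?v x) \<partial>lborel)"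
    by (rule integral_mono) (use le in \<open>auto intro!: hf_int_pow\<close>)
  also have "\<dots> = (2 * (sa (Suc a))^2) * (real (Suc a) + 1/2) + (2 * (sa a)^2) * (real (a - 1) + 1/2)"
    by (simp add: hf_int_pow hf_m2)
  also have "\<dots> \<le> 2 * (real a + 1)^2"
  proof (cases a)
    case 0 then show ?thesis by (simp add: sa_def)
  next
    case (Suc b) then show ?thesis by (simp add: sa_def power2_eq_square algebra_simps) (simp add: field_simps)
  qed
  finally show ?thesis .
qed

lemma eucl_prod_int:
  fixes G :: "'a::euclidean_space \<Rightarrow> real \<Rightarrow> real"
  assumes int: "\<And>b. integrable lborel (G b)"
  shows "integrable lborel (\<lambda>x::'a. \<Prod>b\<in>Basis. G b (x \<bullet> b))"
    "(\<integral>x. (\<Prod>b\<in>Basis. G b (x \<bullet> b)) \<partial>(lborel::'a measure)) = (\<Prod>b\<in>Basis. integral\<^sup>L lborel (G b))"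
proof -
  interpret product_sigma_finite "\<lambda>_::'a. lborel::real measure"
    by (simp add: product_sigma_finite_def lborel.sigma_finite_measure_axioms)
  have Gm[measurable]: "G b \<in> borel_measurable borel" for b
    using borel_measurable_integrable[OF int[of b]] by (simp add: measurable_lborel1)
  have Tm[measurable]: "(\<lambda>f. \<Sum>b\<in>Basis. f b *\<^sub>R b) \<in> measurable (Pi\<^sub>M Basis (\<lambda>_. lborel)) (borel :: 'a measure)"
    by measurable
  have hT: "(\<Prod>b\<in>Basis. G b ((\<Sum>b\<in>Basis. f b *\<^sub>R b) \<bullet> b)) = (\<Prod>b\<in>Basis. G b (f b))" for f
  proof (rule prod.cong[OF refl])
    fix b :: 'a assume b: "b \<in> Basis"
    have "(\<Sum>b\<in>Basis. f b *\<^sub>R b) \<bullet> b = (\<Sum>c\<in>Basis. f c * (c \<bullet> b))" by (simp add: inner_sum_left)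
    also have "\<dots> = (\<Sum>c\<in>Basis. if c = b then f c else 0)"
      by (rule sum.cong[OF refl]) (use b in \<open>auto simp: inner_Basis\<close>)
    also have "\<dots> = f b" using b by simp
    finally show "G b ((\<Sum>b\<in>Basis. f b *\<^sub>R b) \<bullet> b) = G b (f b)" by simp
  qed
  have hm: "(\<lambda>x::'a. \<Prod>b\<in>Basis. G b (x \<bullet> b)) \<in> borel_measurable borel" by measurable
  have i1: "integrable (Pi\<^sub>M Basis (\<lambda>_. lborel)) (\<lambda>f. \<Prod>b\<in>Basis. G b (f b))"
    by (rule product_integrable_prod) (auto intro: int)
  show "integrable lborel (\<lambda>x::'a. \<Prod>b\<in>Basis. G b (x \<bullet> b))"
    apply (subst lborel_eq[where 'a='a])
    apply (subst integrable_distr_eq[OF Tm hm])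
    using i1 by (simp add: hT)
  show "(\<integral>x. (\<Prod>b\<in>Basis. G b (x \<bullet> b)) \<partial>(lborel::'a measure)) = (\<Prod>b\<in>Basis. integral\<^sup>L lborel (G b))"
    apply (subst lborel_eq[where 'a='a])
    apply (subst integral_distr[OF Tm hm])
    apply (simp only: hT)
    by (rule product_integral_prod) (auto intro: int)
qed

lemma Basis_vec_real: "(Basis :: (real^'n) set) = range (\<lambda>j. axis j 1)"
  unfolding Basis_vec_def by auto

lemma inj_axis1: "inj (\<lambda>j::'n::finite. axis j (1::real))"
  by (auto simp: inj_on_def axis_eq_axis)

lemma vec_prod_int:
  fixes F :: "'n::finite \<Rightarrow> real \<Rightarrow> real"
  assumes int: "\<And>j. integrable lborel (F j)"
  shows "integrable lborel (\<lambda>x::real^'n. \<Prod>j\<in>UNIV. F j (x $ j))"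
    "(\<integral>x. (\<Prod>j\<in>UNIV. F j (x $ j)) \<partial>(lborel::(real^'n) measure)) = (\<Prod>j\<in>UNIV. integral\<^sup>L lborel (F j))"
proof -
  define G where "G b = F (axis_index b)" for b :: "real^'n"
  have e1: "(\<Prod>b\<in>Basis. G b (x \<bullet> b)) = (\<Prod>j\<in>UNIV. F j (x $ j))" for x :: "real^'n"
    unfolding Basis_vec_real G_def by (subst prod.reindex[OF inj_axis1]) (simp add: inner_axis)
  have e2: "(\<Prod>b\<in>(Basis :: (real^'n) set). integral\<^sup>L lborel (G b)) = (\<Prod>j\<in>UNIV. integral\<^sup>L lborel (F j))"
    unfolding Basis_vec_real G_def by (subst prod.reindex[OF inj_axis1]) simp
  have iG: "integrable lborel (G b)" for b unfolding G_def by (rule int)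
  show "integrable lborel (\<lambda>x::real^'n. \<Prod>j\<in>UNIV. F j (x $ j))"
    using eucl_prod_int(1)[of G, OF iG] by (simp only: e1)
  show "(\<integral>x. (\<Prod>j\<in>UNIV. F j (x $ j)) \<partial>(lborel::(real^'n) measure)) = (\<Prod>j\<in>UNIV. integral\<^sup>L lborel (F j))"
    using eucl_prod_int(2)[of G, OF iG] by (simp only: e1 e2)
qed

lemma hf_int_abs:
  assumes "pb q" "continuous_on UNIV q"
  shows "integrable lborel (\<lambda>x. q x * \<bar>hermite_fun a x * hermite_fun b x\<bar>)"
proof -
  have eq: "q x * \<bar>hermite_fun a x * hermite_fun b x\<bar>
     = ((q x * \<bar>hermite_poly a x * hermite_poly b x\<bar>) * exp (- (x^2))) / (cn a * cn b)" for x
  proof -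
    have "hermite_fun a x * hermite_fun b x = (hermite_poly a x * hermite_poly b x) * exp (- (x^2)) / (cn a * cn b)"
      using hf_prod[of "\<lambda>x. 1" x a b] by simp
    then have "\<bar>hermite_fun a x * hermite_fun b x\<bar> = \<bar>hermite_poly a x * hermite_poly b x\<bar> * exp (- (x^2)) / (cn a * cn b)"
      using cn_pos[of a] cn_pos[of b] by (simp add: abs_mult)
    then show ?thesis by simp
  qed
  have "integrable lborel (\<lambda>x. (q x * \<bar>hermite_poly a x * hermite_poly b x\<bar>) * exp (- (x^2)))"
    by (rule pb_gauss_integrable[OF pb_mult[OF assms(1) pb_abs[OF pb_mult[OF pb_hp pb_hp]]]])
       (rule continuous_on_mult[OF assms(2) continuous_on_rabs[OF continuous_on_mult[OF hp_cont hp_cont]]])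
  then have "integrable lborel (\<lambda>x. ((q x * \<bar>hermite_poly a x * hermite_poly b x\<bar>) * exp (- (x^2))) / (cn a * cn b))"
    by (rule integrable_divide_zero)
  then show ?thesis by (simp only: eq)
qed

lemma hnd_cont: "continuous_on UNIV (hermite_nd \<mu>)"
proof -
  have "continuous_on UNIV (\<lambda>x::real^'a. \<Prod>i\<in>UNIV. hermite_fun (\<mu> i) (x $ i))"
    by (intro continuous_on_prod hf_cont' continuous_on_component continuous_on_id)
  then show ?thesis unfolding hermite_nd_def[abs_def] .
qed

lemma hnd_meas[measurable]: "hermite_nd \<mu> \<in> borel_measurable borel"
  by (rule borel_measurable_continuous_onI[OF hnd_cont])

lemma nd_int_w:
  fixes e :: "'n::finite \<Rightarrow> nat" and \<mu> \<nu> :: "'n \<Rightarrow> nat"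
  shows "integrable lborel (\<lambda>x::real^'n. (\<Prod>j\<in>UNIV. (x$j)^(e j)) * (hermite_nd \<mu> x * hermite_nd \<nu> x))"
    "(\<integral>x. (\<Prod>j\<in>UNIV. (x$j)^(e j)) * (hermite_nd \<mu> x * hermite_nd \<nu> x) \<partial>(lborel::(real^'n) measure))
      = (\<Prod>j\<in>UNIV. \<integral>t. t^(e j) * hermite_fun (\<mu> j) t * hermite_fun (\<nu> j) t \<partial>lborel)"
proof -
  have eq: "(\<Prod>j\<in>UNIV. (x$j)^(e j)) * (hermite_nd \<mu> x * hermite_nd \<nu> x)
     = (\<Prod>j\<in>UNIV. (\<lambda>j t. t^(e j) * hermite_fun (\<mu> j) t * hermite_fun (\<nu> j) t) j (x $ j))" for x :: "real^'n"
    unfolding hermite_nd_def by (simp add: prod.distrib mult.assoc)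
  have i: "integrable lborel ((\<lambda>j t. t^(e j) * hermite_fun (\<mu> j) t * hermite_fun (\<nu> j) t) j)" for j
    using hf_int_pow by simp
  show "integrable lborel (\<lambda>x::real^'n. (\<Prod>j\<in>UNIV. (x$j)^(e j)) * (hermite_nd \<mu> x * hermite_nd \<nu> x))"
    unfolding eq by (rule vec_prod_int(1)[OF i])
  show "(\<integral>x. (\<Prod>j\<in>UNIV. (x$j)^(e j)) * (hermite_nd \<mu> x * hermite_nd \<nu> x) \<partial>(lborel::(real^'n) measure))
      = (\<Prod>j\<in>UNIV. \<integral>t. t^(e j) * hermite_fun (\<mu> j) t * hermite_fun (\<nu> j) t \<partial>lborel)"
    unfolding eq by (rule vec_prod_int(2)[OF i])
qed

lemma nd_int_abs:
  fixes \<mu> \<nu> :: "'n::finite \<Rightarrow> nat"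
  shows "integrable lborel (\<lambda>x::real^'n. (\<Prod>j\<in>UNIV. (1 + (x$j)^2)^N) * \<bar>hermite_nd \<mu> x * hermite_nd \<nu> x\<bar>)"
proof -
  have eq: "(\<Prod>j\<in>UNIV. (1 + (x$j)^2)^N) * \<bar>hermite_nd \<mu> x * hermite_nd \<nu> x\<bar>
     = (\<Prod>j\<in>UNIV. (\<lambda>j t. (1 + t^2)^N * \<bar>hermite_fun (\<mu> j) t * hermite_fun (\<nu> j) t\<bar>) j (x $ j))" for x :: "real^'n"
    unfolding hermite_nd_def by (simp add: prod.distrib abs_mult abs_prod)
  have i: "integrable lborel ((\<lambda>j t. (1 + t^2)^N * \<bar>hermite_fun (\<mu> j) t * hermite_fun (\<nu> j) t\<bar>) j)" for j
  proof -
    have "pb (\<lambda>t. (1 + t^2)^N)"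
      by (rule pb_power[OF pb_add[OF pb_const pb_power[OF pb_id]]])
    moreover have "continuous_on UNIV (\<lambda>t::real. (1 + t^2)^N)"
      by (intro continuous_on_power continuous_on_add continuous_on_const continuous_on_id)
    ultimately show ?thesis using hf_int_abs by simp
  qed
  show ?thesis unfolding eq by (rule vec_prod_int(1)[OF i])
qed

definition gS :: "('n::finite \<Rightarrow> nat) set \<Rightarrow> (('n \<Rightarrow> nat) \<Rightarrow> complex) \<Rightarrow> real^'n \<Rightarrow> complex" where
  "gS S c x = (\<Sum>\<mu>\<in>S. c \<mu> * complex_of_real (hermite_nd \<mu> x))"

lemma cmod_sq_Re: "(cmod z)^2 = Re (z * cnj z)"
  by (simp add: complex_mult_cnj cmod_power2)

lemma cmod_gS: "(cmod (gS S c x))^2 = (\<Sum>\<mu>\<in>S. \<Sum>\<nu>\<in>S. Re (c \<mu> * cnj (c \<nu>)) * (hermite_nd \<mu> x * hermite_nd \<nu> x))"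
proof -
  have "gS S c x * cnj (gS S c x) = (\<Sum>\<mu>\<in>S. \<Sum>\<nu>\<in>S. (c \<mu> * complex_of_real (hermite_nd \<mu> x)) * (cnj (c \<nu>) * complex_of_real (hermite_nd \<nu> x)))"
    unfolding gS_def by (simp add: cnj_sum sum_product)
  also have "\<dots> = (\<Sum>\<mu>\<in>S. \<Sum>\<nu>\<in>S. (c \<mu> * cnj (c \<nu>)) * complex_of_real (hermite_nd \<mu> x * hermite_nd \<nu> x))"
    by (simp add: algebra_simps)
  finally have "Re (gS S c x * cnj (gS S c x)) = (\<Sum>\<mu>\<in>S. \<Sum>\<nu>\<in>S. Re ((c \<mu> * cnj (c \<nu>)) * complex_of_real (hermite_nd \<mu> x * hermite_nd \<nu> x)))"
    by (simp add: Re_sum)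
  then show ?thesis unfolding cmod_sq_Re by simp
qed

lemma w_int:
  fixes w :: "real^'n::finite \<Rightarrow> real"
  assumes "\<And>\<mu> \<nu>. integrable lborel (\<lambda>x. w x * (hermite_nd \<mu> x * hermite_nd \<nu> x))"
  shows "integrable lborel (\<lambda>x. w x * (cmod (gS S c x))^2)"
    "(\<integral>x. w x * (cmod (gS S c x))^2 \<partial>lborel)
      = (\<Sum>\<mu>\<in>S. \<Sum>\<nu>\<in>S. Re (c \<mu> * cnj (c \<nu>)) * (\<integral>x. w x * (hermite_nd \<mu> x * hermite_nd \<nu> x) \<partial>lborel))"
proof -
  have eq: "w x * (cmod (gS S c x))^2 = (\<Sum>\<mu>\<in>S. \<Sum>\<nu>\<in>S. Re (c \<mu> * cnj (c \<nu>)) * (w x * (hermite_nd \<mu> x * hermite_nd \<nu> x)))" for x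
    unfolding cmod_gS by (simp add: sum_distrib_left algebra_simps)
  show "integrable lborel (\<lambda>x. w x * (cmod (gS S c x))^2)"
    unfolding eq by (intro Bochner_Integration.integrable_sum integrable_mult_right assms)
  show "(\<integral>x. w x * (cmod (gS S c x))^2 \<partial>lborel)
      = (\<Sum>\<mu>\<in>S. \<Sum>\<nu>\<in>S. Re (c \<mu> * cnj (c \<nu>)) * (\<integral>x. w x * (hermite_nd \<mu> x * hermite_nd \<nu> x) \<partial>lborel))"
    unfolding eq
    by (simp add: Bochner_Integration.integral_sum Bochner_Integration.integrable_sum integrable_mult_right assms)
qed

lemma diag_sum:
  assumes "\<And>\<mu> \<nu>. \<mu> \<in> S \<Longrightarrow> \<nu> \<in> S \<Longrightarrow> \<mu> \<noteq> \<nu> \<Longrightarrow> I \<mu> \<nu> = (0::real)" "finite S"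
  shows "(\<Sum>\<mu>\<in>S. \<Sum>\<nu>\<in>S. Re (c \<mu> * cnj (c \<nu>)) * I \<mu> \<nu>) = (\<Sum>\<mu>\<in>S. (cmod (c \<mu>))^2 * I \<mu> \<mu>)"
proof (rule sum.cong[OF refl])
  fix \<mu> assume m: "\<mu> \<in> S"
  have "(\<Sum>\<nu>\<in>S. Re (c \<mu> * cnj (c \<nu>)) * I \<mu> \<nu>) = (\<Sum>\<nu>\<in>S. if \<nu> = \<mu> then Re (c \<mu> * cnj (c \<mu>)) * I \<mu> \<mu> else 0)"
    by (rule sum.cong[OF refl]) (use assms(1) m in auto)
  also have "\<dots> = Re (c \<mu> * cnj (c \<mu>)) * I \<mu> \<mu>" using m assms(2) by simp
  finally show "(\<Sum>\<nu>\<in>S. Re (c \<mu> * cnj (c \<nu>)) * I \<mu> \<nu>) = (cmod (c \<mu>))^2 * I \<mu> \<mu>"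
    by (simp add: cmod_sq_Re)
qed

lemma other_coord:
  fixes \<mu> \<nu> :: "'n::finite \<Rightarrow> nat"
  assumes "mi_abs \<mu> = mi_abs \<nu>" "\<mu> \<noteq> \<nu>"
  shows "\<exists>j. j \<noteq> i \<and> \<mu> j \<noteq> \<nu> j"
proof (rule ccontr)
  assume "\<not> ?thesis"
  then have h: "\<And>j. j \<noteq> i \<Longrightarrow> \<mu> j = \<nu> j" by blast
  have "mi_abs \<mu> = \<mu> i + (\<Sum>j\<in>UNIV - {i}. \<mu> j)" unfolding mi_abs_def
    by (simp add: sum.remove[of UNIV i])
  moreover have "mi_abs \<nu> = \<nu> i + (\<Sum>j\<in>UNIV - {i}. \<nu> j)" unfolding mi_abs_def
    by (simp add: sum.remove[of UNIV i])
  moreover have "(\<Sum>j\<in>UNIV - {i}. \<mu> j) = (\<Sum>j\<in>UNIV - {i}. \<nu> j)"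
    by (rule sum.cong) (auto intro: h)
  ultimately have "\<mu> i = \<nu> i" using assms(1) by simp
  with h have "\<mu> = \<nu>" by (metis ext)
  with assms(2) show False by simp
qed

definition ew :: "'n \<Rightarrow> nat \<Rightarrow> 'n \<Rightarrow> nat" where "ew i p = (\<lambda>j. if j = i then p else 0)"

lemma ew_prod: "(\<Prod>j\<in>(UNIV::'n::finite set). (x$j)^(ew i p j)) = (x$i)^p"
proof -
  have "(\<Prod>j\<in>(UNIV::'n set). (x$j)^(ew i p j)) = (\<Prod>j\<in>(UNIV::'n set). if j = i then (x$j)^p else 1)"
    by (rule prod.cong) (auto simp: ew_def)
  also have "\<dots> = (x$i)^p" by simp
  finally show ?thesis .
qed

lemma I_offdiag:
  fixes \<mu> \<nu> :: "'n::finite \<Rightarrow> nat"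
  assumes "mi_abs \<mu> = mi_abs \<nu>" "\<mu> \<noteq> \<nu>"
  shows "(\<Prod>j\<in>UNIV. \<integral>t. t^(ew i p j) * hermite_fun (\<mu> j) t * hermite_fun (\<nu> j) t \<partial>lborel) = 0"
proof -
  obtain j where j: "j \<noteq> i" "\<mu> j \<noteq> \<nu> j" using other_coord[OF assms] by blast
  have "(\<integral>t. t^(ew i p j) * hermite_fun (\<mu> j) t * hermite_fun (\<nu> j) t \<partial>lborel) = 0"
    using j hf_orth[of "\<mu> j" "\<nu> j"] by (simp add: ew_def)
  then show ?thesis by (intro prod_zero) auto
qed

lemma I_diag:
  fixes \<mu> :: "'n::finite \<Rightarrow> nat"
  shows "(\<Prod>j\<in>UNIV. \<integral>t. t^(ew i p j) * hermite_fun (\<mu> j) t * hermite_fun (\<mu> j) t \<partial>lborel)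
     = (\<integral>t. t^p * hermite_fun (\<mu> i) t * hermite_fun (\<mu> i) t \<partial>lborel)"
proof -
  have "(\<Prod>j\<in>UNIV. \<integral>t. t^(ew i p j) * hermite_fun (\<mu> j) t * hermite_fun (\<mu> j) t \<partial>lborel)
    = (\<Prod>j\<in>UNIV. if j = i then (\<integral>t. t^p * hermite_fun (\<mu> i) t * hermite_fun (\<mu> i) t \<partial>lborel) else 1)"
    by (rule prod.cong) (auto simp: ew_def hf_orth)
  also have "\<dots> = (\<integral>t. t^p * hermite_fun (\<mu> i) t * hermite_fun (\<mu> i) t \<partial>lborel)" by simp
  finally show ?thesis .
qed

lemma mom_gS:
  fixes S :: "('n::finite \<Rightarrow> nat) set"
  assumes S: "finite S" "\<And>\<mu>. \<mu> \<in> S \<Longrightarrow> mi_abs \<mu> = m"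
  shows "integrable lborel (\<lambda>x::real^'n. (x$i)^p * (cmod (gS S c x))^2)"
    "(\<integral>x. (x$i)^p * (cmod (gS S c x))^2 \<partial>lborel)
       = (\<Sum>\<mu>\<in>S. (cmod (c \<mu>))^2 * (\<integral>t. t^p * hermite_fun (\<mu> i) t * hermite_fun (\<mu> i) t \<partial>lborel))"
proof -
  have iw: "integrable lborel (\<lambda>x::real^'n. (x$i)^p * (hermite_nd \<mu> x * hermite_nd \<nu> x))" for \<mu> \<nu>
    using nd_int_w(1)[of "ew i p" \<mu> \<nu>] by (simp only: ew_prod)
  show "integrable lborel (\<lambda>x::real^'n. (x$i)^p * (cmod (gS S c x))^2)"
    by (rule w_int(1)[OF iw])
  have "(\<integral>x. (x$i)^p * (cmod (gS S c x))^2 \<partial>lborel)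
     = (\<Sum>\<mu>\<in>S. \<Sum>\<nu>\<in>S. Re (c \<mu> * cnj (c \<nu>)) * (\<integral>x. (x$i)^p * (hermite_nd \<mu> x * hermite_nd \<nu> x) \<partial>lborel))"
    by (rule w_int(2)[OF iw])
  also have "\<dots> = (\<Sum>\<mu>\<in>S. \<Sum>\<nu>\<in>S. Re (c \<mu> * cnj (c \<nu>)) *
      (\<Prod>j\<in>UNIV. \<integral>t. t^(ew i p j) * hermite_fun (\<mu> j) t * hermite_fun (\<nu> j) t \<partial>lborel))"
    using nd_int_w(2)[of "ew i p"] by (simp only: ew_prod)
  also have "\<dots> = (\<Sum>\<mu>\<in>S. (cmod (c \<mu>))^2 *
      (\<Prod>j\<in>UNIV. \<integral>t. t^(ew i p j) * hermite_fun (\<mu> j) t * hermite_fun (\<mu> j) t \<partial>lborel))"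
    by (rule diag_sum[OF _ S(1)]) (rule I_offdiag, use S(2) in auto)
  also have "\<dots> = (\<Sum>\<mu>\<in>S. (cmod (c \<mu>))^2 * (\<integral>t. t^p * hermite_fun (\<mu> i) t * hermite_fun (\<mu> i) t \<partial>lborel))"
    by (simp only: I_diag)
  finally show "(\<integral>x. (x$i)^p * (cmod (gS S c x))^2 \<partial>lborel)
       = (\<Sum>\<mu>\<in>S. (cmod (c \<mu>))^2 * (\<integral>t. t^p * hermite_fun (\<mu> i) t * hermite_fun (\<mu> i) t \<partial>lborel))" .
qed

context
  fixes S :: "('n::finite \<Rightarrow> nat) set" and c :: "('n \<Rightarrow> nat) \<Rightarrow> complex" and m :: nat
  assumes S: "finite S" "\<And>\<mu>. \<mu> \<in> S \<Longrightarrow> mi_abs \<mu> = m"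
begin

lemma M0:
  "integrable lborel (\<lambda>x::real^'n. (cmod (gS S c x))^2)"
  "(\<integral>x. (cmod (gS S c x))^2 \<partial>lborel) = (\<Sum>\<mu>\<in>S. (cmod (c \<mu>))^2)"
proof -
  fix i :: 'n
  show "integrable lborel (\<lambda>x::real^'n. (cmod (gS S c x))^2)"
    using mom_gS(1)[OF S, of i 0 c] by simp
  show "(\<integral>x. (cmod (gS S c x))^2 \<partial>lborel) = (\<Sum>\<mu>\<in>S. (cmod (c \<mu>))^2)"
    using mom_gS(2)[OF S, of i 0 c] by (simp add: hf_orth)
qed

lemma M2i: "(\<integral>x. (x$i)^2 * (cmod (gS S c x))^2 \<partial>lborel) = (\<Sum>\<mu>\<in>S. (cmod (c \<mu>))^2 * (real (\<mu> i) + 1/2))"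
  using mom_gS(2)[OF S, of i 2 c] by (simp add: hf_m2)

lemma M4i: "(\<integral>x. (x$i)^4 * (cmod (gS S c x))^2 \<partial>lborel) \<le> (\<Sum>\<mu>\<in>S. (cmod (c \<mu>))^2 * (2 * (real (\<mu> i) + 1)^2))"
proof -
  have "(\<integral>x. (x$i)^4 * (cmod (gS S c x))^2 \<partial>lborel)
       = (\<Sum>\<mu>\<in>S. (cmod (c \<mu>))^2 * (\<integral>t. t^4 * hermite_fun (\<mu> i) t * hermite_fun (\<mu> i) t \<partial>lborel))"
    by (rule mom_gS(2)[OF S])
  also have "\<dots> \<le> (\<Sum>\<mu>\<in>S. (cmod (c \<mu>))^2 * (2 * (real (\<mu> i) + 1)^2))"
    by (intro sum_mono mult_left_mono hf_m4) auto
  finally show ?thesis .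
qed

lemma norm_sq_vec: "(norm (x::real^'n))^2 = (\<Sum>i\<in>UNIV. (x$i)^2)"
  unfolding norm_vec_def L2_set_def by (simp add: sum_nonneg)

lemma M2_int: "integrable lborel (\<lambda>x::real^'n. (norm x)^2 * (cmod (gS S c x))^2)"
proof -
  have "integrable lborel (\<lambda>x::real^'n. \<Sum>i\<in>UNIV. (x$i)^2 * (cmod (gS S c x))^2)"
    by (intro Bochner_Integration.integrable_sum mom_gS(1)[OF S])
  then show ?thesis by (simp add: norm_sq_vec sum_distrib_right)
qed

lemma M2: "(\<integral>x. (norm x)^2 * (cmod (gS S c x))^2 \<partial>lborel)
   = (real m + real CARD('n) / 2) * (\<Sum>\<mu>\<in>S. (cmod (c \<mu>))^2)"
proof -
  have "(\<integral>x. (norm x)^2 * (cmod (gS S c x))^2 \<partial>lborel)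
      = (\<integral>x. (\<Sum>i\<in>UNIV. (x$i)^2 * (cmod (gS S c x))^2) \<partial>lborel)"
    by (simp add: norm_sq_vec sum_distrib_right)
  also have "\<dots> = (\<Sum>i\<in>UNIV. \<integral>x. (x$i)^2 * (cmod (gS S c x))^2 \<partial>lborel)"
    by (intro Bochner_Integration.integral_sum mom_gS(1)[OF S])
  also have "\<dots> = (\<Sum>i\<in>UNIV. \<Sum>\<mu>\<in>S. (cmod (c \<mu>))^2 * (real (\<mu> i) + 1/2))"
    by (simp add: M2i)
  also have "\<dots> = (\<Sum>\<mu>\<in>S. (cmod (c \<mu>))^2 * (\<Sum>i\<in>UNIV. (real (\<mu> i) + 1/2)))"
    by (subst sum.swap) (simp add: sum_distrib_left)
  also have "\<dots> = (\<Sum>\<mu>\<in>S. (cmod (c \<mu>))^2 * (real m + real CARD('n) / 2))"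
  proof (rule sum.cong[OF refl])
    fix \<mu> assume "\<mu> \<in> S"
    then have "mi_abs \<mu> = m" by (rule S(2))
    then have "(\<Sum>i\<in>UNIV. real (\<mu> i)) = real m" unfolding mi_abs_def by (metis of_nat_sum)
    then show "(cmod (c \<mu>))^2 * (\<Sum>i\<in>UNIV. (real (\<mu> i) + 1/2)) = (cmod (c \<mu>))^2 * (real m + real CARD('n) / 2)"
      by (simp add: sum.distrib)
  qed
  also have "\<dots> = (real m + real CARD('n) / 2) * (\<Sum>\<mu>\<in>S. (cmod (c \<mu>))^2)"
    by (simp add: sum_distrib_left mult.commute)
  finally show ?thesis .
qed

lemma M4_int: "integrable lborel (\<lambda>x::real^'n. (\<Sum>i\<in>UNIV. (x$i)^4) * (cmod (gS S c x))^2)"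
proof -
  have "integrable lborel (\<lambda>x::real^'n. \<Sum>i\<in>UNIV. (x$i)^4 * (cmod (gS S c x))^2)"
    by (intro Bochner_Integration.integrable_sum mom_gS(1)[OF S])
  then show ?thesis by (simp add: sum_distrib_right)
qed

lemma M4: "(\<integral>x. (\<Sum>i\<in>UNIV. (x$i)^4) * (cmod (gS S c x))^2 \<partial>lborel)
   \<le> 2 * real CARD('n) * (real m + 1)^2 * (\<Sum>\<mu>\<in>S. (cmod (c \<mu>))^2)"
proof -
  have "(\<integral>x. (\<Sum>i\<in>UNIV. (x$i)^4) * (cmod (gS S c x))^2 \<partial>lborel)
      = (\<integral>x. (\<Sum>i\<in>UNIV. (x$i)^4 * (cmod (gS S c x))^2) \<partial>lborel)"
    by (simp add: sum_distrib_right)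
  also have "\<dots> = (\<Sum>i\<in>UNIV. \<integral>x. (x$i)^4 * (cmod (gS S c x))^2 \<partial>lborel)"
    by (intro Bochner_Integration.integral_sum mom_gS(1)[OF S])
  also have "\<dots> \<le> (\<Sum>i\<in>UNIV. \<Sum>\<mu>\<in>S. (cmod (c \<mu>))^2 * (2 * (real (\<mu> i) + 1)^2))"
    by (intro sum_mono M4i)
  also have "\<dots> \<le> (\<Sum>i\<in>(UNIV::'n set). \<Sum>\<mu>\<in>S. (cmod (c \<mu>))^2 * (2 * (real m + 1)^2))"
  proof (intro sum_mono mult_left_mono)
    fix i :: 'n and \<mu> assume "i \<in> UNIV" "\<mu> \<in> S"
    then have "mi_abs \<mu> = m" using S(2) by blast
    then have "\<mu> i \<le> m" unfolding mi_abs_def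
      using member_le_sum[of i UNIV \<mu>] by simp
    then show "(real (\<mu> i) + 1)^2 \<le> (real m + 1)^2" by (simp add: power_mono)
  qed auto
  also have "\<dots> = 2 * real CARD('n) * (real m + 1)^2 * (\<Sum>\<mu>\<in>S. (cmod (c \<mu>))^2)"
    by (simp add: sum_distrib_left sum_distrib_right algebra_simps)
  finally show ?thesis .
qed

end

lemma one_plus_sum_le_prod:
  assumes "finite A" "\<And>j. j \<in> A \<Longrightarrow> (a j::real) \<ge> 0"
  shows "1 + (\<Sum>j\<in>A. a j) \<le> (\<Prod>j\<in>A. 1 + a j)"
  using assms
proof (induction A rule: finite_induct)
  case empty then show ?case by simp
next
  case (insert x F)
  have ax: "a x \<ge> 0" using insert by auto
  have IH: "1 + (\<Sum>j\<in>F. a j) \<le> (\<Prod>j\<in>F. 1 + a j)" using insert by auto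
  have s: "(\<Sum>j\<in>F. a j) \<ge> 0" using insert by (auto intro: sum_nonneg)
  have "1 + (\<Sum>j\<in>insert x F. a j) = 1 + a x + (\<Sum>j\<in>F. a j)" using insert by simp
  also have "\<dots> \<le> (1 + a x) * (1 + (\<Sum>j\<in>F. a j))" using ax s by (simp add: algebra_simps)
  also have "\<dots> \<le> (1 + a x) * (\<Prod>j\<in>F. 1 + a j)" using IH ax by (intro mult_left_mono) auto
  also have "\<dots> = (\<Prod>j\<in>insert x F. 1 + a j)" using insert by simp
  finally show ?case .
qed

lemma norm_sq_vec': "(norm (x::real^'n::finite))^2 = (\<Sum>i\<in>UNIV. (x$i)^2)"
  unfolding norm_vec_def L2_set_def by (simp add: sum_nonneg)

lemma weight_bound:
  fixes x :: "real^'n::finite" and \<alpha> :: real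
  shows "(1 + norm x) powr \<alpha> \<le> 2 ^ (nat \<lceil>\<alpha>/2\<rceil>) * (\<Prod>j\<in>UNIV. (1 + (x$j)^2) ^ (nat \<lceil>\<alpha>/2\<rceil>))"
proof -
  define K where "K = nat \<lceil>\<alpha>/2\<rceil>"
  define t where "t = norm x"
  have t0: "t \<ge> 0" unfolding t_def by simp
  have "(1 + t) powr \<alpha> \<le> (1 + t) powr (real (2 * K))"
    by (rule powr_mono) (use t0 in \<open>auto simp: K_def\<close>, linarith)
  also have "\<dots> = (1 + t) ^ (2 * K)" by (rule powr_realpow) (use t0 in simp)
  also have "\<dots> = ((1 + t)^2) ^ K" by (simp add: power_mult)
  also have "\<dots> \<le> (2 * (1 + t^2)) ^ K"
  proof (rule power_mono)
    have "0 \<le> (t - 1)^2" by simp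
    then show "(1 + t)^2 \<le> 2 * (1 + t^2)" by (simp add: power2_eq_square algebra_simps)
  qed simp
  also have "\<dots> = 2 ^ K * (1 + t^2) ^ K" by (rule power_mult_distrib)
  also have "\<dots> \<le> 2 ^ K * (\<Prod>j\<in>UNIV. 1 + (x$j)^2) ^ K"
  proof (intro mult_left_mono power_mono)
    show "1 + t^2 \<le> (\<Prod>j\<in>UNIV. 1 + (x$j)^2)"
      unfolding t_def norm_sq_vec' by (rule one_plus_sum_le_prod) auto
  qed (auto simp: t0)
  also have "\<dots> = 2 ^ K * (\<Prod>j\<in>UNIV. (1 + (x$j)^2) ^ K)" by (simp add: prod_power_distrib)
  finally show ?thesis unfolding K_def t_def .
qed

lemma gS_meas[measurable]: "gS S c \<in> borel_measurable borel"
  unfolding gS_def[abs_def] by measurable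

lemma W_int:
  fixes S :: "('n::finite \<Rightarrow> nat) set"
  assumes "finite S"
  shows "integrable lborel (\<lambda>x::real^'n. (cmod (gS S c x))^2 * (1 + norm x) powr \<alpha>)"
proof (rule Bochner_Integration.integrable_bound)
  define K where "K = nat \<lceil>\<alpha>/2\<rceil>"
  let ?D = "\<lambda>x::real^'n. \<Sum>\<mu>\<in>S. \<Sum>\<nu>\<in>S. \<bar>Re (c \<mu> * cnj (c \<nu>))\<bar> * 2 ^ K *
     ((\<Prod>j\<in>UNIV. (1 + (x$j)^2) ^ K) * \<bar>hermite_nd \<mu> x * hermite_nd \<nu> x\<bar>)"
  show "integrable lborel ?D"
    by (intro Bochner_Integration.integrable_sum integrable_mult_right nd_int_abs)
  show "(\<lambda>x::real^'n. (cmod (gS S c x))^2 * (1 + norm x) powr \<alpha>) \<in> borel_measurable lborel"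
    by measurable
  show "AE x in lborel. norm ((cmod (gS S c x))^2 * (1 + norm x) powr \<alpha>) \<le> norm (?D x)"
  proof (intro AE_I2)
    fix x :: "real^'n"
    let ?P = "\<Prod>j\<in>UNIV. (1 + (x$j)^2) ^ K"
    have P0: "?P \<ge> 0" by (intro prod_nonneg) auto
    have wb: "(1 + norm x) powr \<alpha> \<le> 2 ^ K * ?P" unfolding K_def by (rule weight_bound)
    have "(cmod (gS S c x))^2 \<le> (\<Sum>\<mu>\<in>S. \<Sum>\<nu>\<in>S. \<bar>Re (c \<mu> * cnj (c \<nu>))\<bar> * \<bar>hermite_nd \<mu> x * hermite_nd \<nu> x\<bar>)"
      unfolding cmod_gS
      by (intro sum_mono) (metis abs_ge_self abs_mult)
    then have "(cmod (gS S c x))^2 * (1 + norm x) powr \<alpha>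
       \<le> (\<Sum>\<mu>\<in>S. \<Sum>\<nu>\<in>S. \<bar>Re (c \<mu> * cnj (c \<nu>))\<bar> * \<bar>hermite_nd \<mu> x * hermite_nd \<nu> x\<bar>) * (2 ^ K * ?P)"
      by (intro mult_mono wb) (auto intro!: sum_nonneg)
    also have "\<dots> = ?D x"
      by (simp add: sum_distrib_right sum_distrib_left mult_ac)
    finally have "(cmod (gS S c x))^2 * (1 + norm x) powr \<alpha> \<le> ?D x" .
    moreover have "?D x \<le> norm (?D x)" by simp
    ultimately show "norm ((cmod (gS S c x))^2 * (1 + norm x) powr \<alpha>) \<le> norm (?D x)"
      by simp
  qed
qed

lemma sq_powr: "(t::real) > 0 \<Longrightarrow> t powr 2 = t^2"
  using powr_realpow[of t 2] by simp

lemma pw_ge2: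
  fixes \<alpha> R t :: real
  assumes "\<alpha> \<ge> 2" "R > 0" "t \<ge> 0"
  shows "R powr (\<alpha> - 2) * t^2 - R powr \<alpha> \<le> (1 + t) powr \<alpha>"
proof (cases "t \<ge> R")
  case True
  then have tp: "t > 0" using assms by linarith
  have "R powr (\<alpha> - 2) * t^2 \<le> t powr (\<alpha> - 2) * t^2"
    by (intro mult_right_mono powr_mono2) (use assms True in auto)
  also have "\<dots> = t powr (\<alpha> - 2) * t powr 2" using sq_powr[OF tp] by simp
  also have "\<dots> = t powr \<alpha>" by (simp add: powr_add[symmetric])
  also have "\<dots> \<le> (1 + t) powr \<alpha>" by (rule powr_mono2) (use assms in auto)
  finally show ?thesis using powr_ge_zero[of R \<alpha>] by linarith
next
  case False
  have "R powr (\<alpha> - 2) * t^2 \<le> R powr (\<alpha> - 2) * R^2"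
    by (intro mult_left_mono power_mono) (use False assms in auto)
  also have "\<dots> = R powr (\<alpha> - 2) * R powr 2" using sq_powr[OF assms(2)] by simp
  also have "\<dots> = R powr \<alpha>" by (simp add: powr_add[symmetric])
  finally have "R powr (\<alpha> - 2) * t^2 - R powr \<alpha> \<le> 0" by simp
  moreover have "0 \<le> (1 + t) powr \<alpha>" by simp
  ultimately show ?thesis by linarith
qed

lemma pw_lt2:
  fixes \<alpha> R t :: real
  assumes "0 \<le> \<alpha>" "\<alpha> < 2" "R > 0" "t \<ge> 0"
  shows "t^2 \<le> R powr (2 - \<alpha>) * (1 + t) powr \<alpha> + t^4 / R^2"
proof (cases "t \<le> R")
  case True
  show ?thesis
  proof (cases "t = 0")
    case True then show ?thesis using assms by simp
  next
    case False
    then have tp: "t > 0" using assms by simp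
    have "t^2 = t powr 2" using sq_powr[OF tp] by simp
    also have "\<dots> = t powr \<alpha> * t powr (2 - \<alpha>)" by (simp add: powr_add[symmetric])
    also have "\<dots> \<le> (1 + t) powr \<alpha> * R powr (2 - \<alpha>)"
      by (intro mult_mono powr_mono2) (use assms True in auto)
    also have "\<dots> \<le> R powr (2 - \<alpha>) * (1 + t) powr \<alpha> + t^4 / R^2" using assms by simp
    finally show ?thesis .
  qed
next
  case False
  have "t^2 * R^2 \<le> t^2 * t^2"
    by (intro mult_left_mono power_mono) (use False assms in auto)
  then have "t^2 \<le> t^4 / R^2" using assms by (simp add: pos_le_divide_eq power4_eq_xxxx power2_eq_square mult.assoc)
  moreover have "0 \<le> R powr (2 - \<alpha>) * (1 + t) powr \<alpha>" by simp
  ultimately show ?thesis by linarith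
qed

lemma alg_ge2:
  fixes \<alpha> L N R W :: real
  assumes "\<alpha> \<ge> 2" "L > 0" "N \<ge> 0" "R = sqrt L / 2"
    "R powr (\<alpha> - 2) * (L / 2 * N) - R powr \<alpha> * N \<le> W"
  shows "(1 / 2 powr \<alpha>) * L powr (\<alpha> / 2) * N \<le> W"
proof -
  have Rp: "R > 0" unfolding assms(4) using assms(2) by simp
  have R2: "R powr 2 = L / 4"
  proof -
    have "R powr 2 = R^2" by (rule sq_powr[OF Rp])
    also have "\<dots> = L / 4" unfolding assms(4) using assms(2) by (simp add: power_divide)
    finally show ?thesis .
  qed
  have "R powr (\<alpha> - 2) = R powr \<alpha> / (L / 4)" by (simp add: powr_diff R2)
  then have "R powr (\<alpha> - 2) * (L / 2 * N) = 2 * R powr \<alpha> * N" using assms(2) by (simp add: field_simps)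
  then have "R powr (\<alpha> - 2) * (L / 2 * N) - R powr \<alpha> * N = R powr \<alpha> * N" by linarith
  then have "R powr \<alpha> * N \<le> W" using assms(5) by linarith
  moreover have "R powr \<alpha> = L powr (\<alpha> / 2) / 2 powr \<alpha>"
  proof -
    have "R powr \<alpha> = sqrt L powr \<alpha> / 2 powr \<alpha>" unfolding assms(4)
      by (rule powr_divide)
    also have "sqrt L = L powr (1/2)" using assms(2) by (simp add: powr_half_sqrt)
    then have "sqrt L powr \<alpha> = L powr (\<alpha> / 2)" by (simp add: powr_powr)
    finally show ?thesis .
  qed
  ultimately show ?thesis by simp
qed

lemma alg_lt2:
  fixes \<alpha> L N R W n :: real
  assumes "0 \<le> \<alpha>" "\<alpha> < 2" "L > 0" "N \<ge> 0" "n \<ge> 1" "R = sqrt (8 * n^2 * L)"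
    "L / 2 * N \<le> R powr (2 - \<alpha>) * W + L / 4 * N"
  shows "(1 / (4 * (8 * n^2) powr (1 - \<alpha>/2))) * L powr (\<alpha> / 2) * N \<le> W"
proof -
  define A where "A = (8 * n^2) powr (1 - \<alpha>/2)"
  define B where "B = L powr (1 - \<alpha>/2)"
  have Ap: "A > 0" unfolding A_def using assms by simp
  have Bp: "B > 0" unfolding B_def using assms by simp
  have "R = (8 * n^2 * L) powr (1/2)" using assms by (simp add: powr_half_sqrt)
  then have "R powr (2 - \<alpha>) = (8 * n^2 * L) powr (1 - \<alpha>/2)" by (simp add: powr_powr field_simps)
  also have "\<dots> = A * B" unfolding A_def B_def using assms by (simp add: powr_mult)
  finally have RAB: "R powr (2 - \<alpha>) = A * B" .
  have LB: "L = L powr (\<alpha>/2) * B"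
  proof -
    have "L powr (\<alpha>/2) * B = L" unfolding B_def using assms(3) by (simp add: powr_add[symmetric])
    then show ?thesis by simp
  qed
  have "L / 4 * N \<le> A * B * W" using assms(7) RAB by simp
  then have "L powr (\<alpha>/2) * B * N / 4 \<le> A * B * W" using LB by (metis mult.commute times_divide_eq_left)
  then have "B * (L powr (\<alpha>/2) * N / 4) \<le> B * (A * W)" by (simp add: algebra_simps)
  then have "L powr (\<alpha>/2) * N / 4 \<le> A * W" using Bp by simp
  then show ?thesis unfolding A_def[symmetric] using Ap by (simp add: field_simps)
qed

definition kap :: "real \<Rightarrow> real \<Rightarrow> real" where
  "kap \<alpha> n = (if \<alpha> \<ge> 2 then 1 / 2 powr \<alpha> else 1 / (4 * (8 * n^2) powr (1 - \<alpha>/2)))"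

lemma kap_pos: "n > 0 \<Longrightarrow> kap \<alpha> n > 0"
  unfolding kap_def by auto

lemma main_lower:
  fixes S :: "('n::finite \<Rightarrow> nat) set" and \<alpha> :: real
  assumes \<alpha>: "\<alpha> \<ge> 0" and S: "finite S" "\<And>\<mu>. \<mu> \<in> S \<Longrightarrow> mi_abs \<mu> = m"
  shows "kap \<alpha> (real CARD('n)) * (2 * real m + real CARD('n)) powr (\<alpha>/2) * (\<Sum>\<mu>\<in>S. (cmod (c \<mu>))^2)
     \<le> (\<integral>x. (cmod (gS S c x))^2 * (1 + norm x) powr \<alpha> \<partial>lborel)"
proof -
  define G where "G x = (cmod (gS S c x))^2" for x :: "real^'n"
  define N where "N = (\<Sum>\<mu>\<in>S. (cmod (c \<mu>))^2)"
  define L where "L = 2 * real m + real CARD('n)"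
  define n where "n = real CARD('n)"
  define W where "W = (\<integral>x. G x * (1 + norm x) powr \<alpha> \<partial>lborel)"
  have n1: "n \<ge> 1" unfolding n_def by simp
  have Lp: "L > 0" unfolding L_def using n1[unfolded n_def] of_nat_0_le_iff[of m] by linarith
  have N0: "N \<ge> 0" unfolding N_def by (intro sum_nonneg) auto
  have G0: "G x \<ge> 0" for x unfolding G_def by simp
  have iG: "integrable lborel G" unfolding G_def by (rule M0(1)[OF S])
  have IG: "(\<integral>x. G x \<partial>lborel) = N" unfolding G_def N_def by (rule M0(2)[OF S])
  have iM2: "integrable lborel (\<lambda>x. (norm x)^2 * G x)" unfolding G_def by (rule M2_int[OF S])
  have IM2: "(\<integral>x. (norm x)^2 * G x \<partial>lborel) = L / 2 * N"
    unfolding G_def using M2[OF S, of c] unfolding N_def L_def by (simp add: field_simps)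
  have iM4: "integrable lborel (\<lambda>x::real^'n. (\<Sum>i\<in>UNIV. (x$i)^4) * G x)" unfolding G_def by (rule M4_int[OF S])
  have IM4: "(\<integral>x. (\<Sum>i\<in>UNIV. (x$i)^4) * G x \<partial>lborel) \<le> 2 * n * (real m + 1)^2 * N"
    unfolding G_def N_def n_def by (rule M4[OF S])
  have iW: "integrable lborel (\<lambda>x. G x * (1 + norm x) powr \<alpha>)" unfolding G_def by (rule W_int[OF S(1)])
  have "kap \<alpha> n * L powr (\<alpha>/2) * N \<le> W"
  proof (cases "\<alpha> \<ge> 2")
    case True
    define R where "R = sqrt L / 2"
    have Rp: "R > 0" unfolding R_def using Lp by simp
    have "(\<integral>x. R powr (\<alpha> - 2) * ((norm x)^2 * G x) - R powr \<alpha> * G x \<partial>lborel) \<le> W"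
      unfolding W_def
    proof (rule integral_mono)
      show "integrable lborel (\<lambda>x. R powr (\<alpha> - 2) * ((norm x)^2 * G x) - R powr \<alpha> * G x)"
        by (intro Bochner_Integration.integrable_diff integrable_mult_right iM2 iG)
      show "integrable lborel (\<lambda>x. G x * (1 + norm x) powr \<alpha>)" by (rule iW)
      fix x :: "real^'n"
      have "R powr (\<alpha> - 2) * ((norm x)^2 * G x) - R powr \<alpha> * G x = G x * (R powr (\<alpha> - 2) * (norm x)^2 - R powr \<alpha>)"
        by (simp add: algebra_simps)
      also have "\<dots> \<le> G x * (1 + norm x) powr \<alpha>"
        by (intro mult_left_mono pw_ge2 G0) (use True Rp in auto)
      finally show "R powr (\<alpha> - 2) * ((norm x)^2 * G x) - R powr \<alpha> * G x \<le> G x * (1 + norm x) powr \<alpha>" .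
    qed
    moreover have "(\<integral>x. R powr (\<alpha> - 2) * ((norm x)^2 * G x) - R powr \<alpha> * G x \<partial>lborel)
        = R powr (\<alpha> - 2) * (L / 2 * N) - R powr \<alpha> * N"
      by (simp add: Bochner_Integration.integral_diff integrable_mult_right iM2 iG IM2 IG)
    ultimately have "R powr (\<alpha> - 2) * (L / 2 * N) - R powr \<alpha> * N \<le> W" by simp
    then have "(1 / 2 powr \<alpha>) * L powr (\<alpha> / 2) * N \<le> W"
      by (intro alg_ge2[OF True Lp N0 R_def])
    then show ?thesis unfolding kap_def using True by simp
  next
    case False
    then have a2: "\<alpha> < 2" by simp
    define R where "R = sqrt (8 * n^2 * L)"
    have Rp: "R > 0" unfolding R_def using Lp n1 by simp
    have R2: "R^2 = 8 * n^2 * L" unfolding R_def using Lp by simp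
    have "(\<integral>x. (norm x)^2 * G x \<partial>lborel)
       \<le> (\<integral>x. R powr (2 - \<alpha>) * (G x * (1 + norm x) powr \<alpha>) + (n / R^2) * ((\<Sum>i\<in>UNIV. (x$i)^4) * G x) \<partial>lborel)"
    proof (rule integral_mono)
      show "integrable lborel (\<lambda>x. (norm x)^2 * G x)" by (rule iM2)
      show "integrable lborel (\<lambda>x. R powr (2 - \<alpha>) * (G x * (1 + norm x) powr \<alpha>) + (n / R^2) * ((\<Sum>i\<in>UNIV. (x$i)^4) * G x))"
        by (intro Bochner_Integration.integrable_add integrable_mult_right iW iM4)
      fix x :: "real^'n"
      have t4: "(norm x)^4 \<le> n * (\<Sum>i\<in>UNIV. (x$i)^4)"
      proof -
        have "(norm x)^4 = ((norm x)^2)^2" by simp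
        also have "\<dots> = (\<Sum>i\<in>UNIV. (x$i)^2)^2" by (simp only: norm_sq_vec')
        also have "\<dots> \<le> (\<Sum>i\<in>UNIV. ((x$i)^2)^2) * card (UNIV::'n set)"
          by (rule sum_squared_le_sum_of_squares)
        also have "\<dots> = n * (\<Sum>i\<in>UNIV. (x$i)^4)" unfolding n_def by (simp add: mult.commute)
        finally show ?thesis .
      qed
      have "(norm x)^2 * G x \<le> (R powr (2 - \<alpha>) * (1 + norm x) powr \<alpha> + (norm x)^4 / R^2) * G x"
        by (intro mult_right_mono pw_lt2 G0) (use \<alpha> a2 Rp in auto)
      also have "\<dots> \<le> (R powr (2 - \<alpha>) * (1 + norm x) powr \<alpha> + n * (\<Sum>i\<in>UNIV. (x$i)^4) / R^2) * G x"
        by (intro mult_right_mono add_left_mono divide_right_mono t4 G0) simp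
      also have "\<dots> = R powr (2 - \<alpha>) * (G x * (1 + norm x) powr \<alpha>) + (n / R^2) * ((\<Sum>i\<in>UNIV. (x$i)^4) * G x)"
        by (simp add: algebra_simps)
      finally show "(norm x)^2 * G x \<le> R powr (2 - \<alpha>) * (G x * (1 + norm x) powr \<alpha>) + (n / R^2) * ((\<Sum>i\<in>UNIV. (x$i)^4) * G x)" .
    qed
    also have "\<dots> = R powr (2 - \<alpha>) * W + (n / R^2) * (\<integral>x. (\<Sum>i\<in>UNIV. (x$i)^4) * G x \<partial>lborel)"
      unfolding W_def by (simp add: Bochner_Integration.integral_add integrable_mult_right iW iM4)
    also have "\<dots> \<le> R powr (2 - \<alpha>) * W + (n / R^2) * (2 * n * (real m + 1)^2 * N)"
      by (intro add_left_mono mult_left_mono IM4) (use n1 in simp)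
    also have "(n / R^2) * (2 * n * (real m + 1)^2 * N) \<le> L / 4 * N"
    proof -
      have m1: "real m + 1 \<le> L" unfolding L_def using n1[unfolded n_def] of_nat_0_le_iff[of m] by linarith
      have "(real m + 1)^2 \<le> L^2" by (rule power_mono[OF m1]) simp
      then have "(n / R^2) * (2 * n * (real m + 1)^2 * N) \<le> (n / R^2) * (2 * n * L^2 * N)"
        by (intro mult_left_mono mult_right_mono) (use n1 N0 in auto)
      also have "\<dots> = L / 4 * N" unfolding R2 using n1 Lp by (simp add: field_simps power2_eq_square)
      finally show ?thesis .
    qed
    finally have "L / 2 * N \<le> R powr (2 - \<alpha>) * W + L / 4 * N" using IM2 by simp
    then have "(1 / (4 * (8 * n^2) powr (1 - \<alpha>/2))) * L powr (\<alpha> / 2) * N \<le> W"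
      by (intro alg_lt2[OF \<alpha> a2 Lp N0 n1 R_def])
    then show ?thesis unfolding kap_def using False by simp
  qed
  then show ?thesis unfolding n_def L_def N_def W_def G_def .
qed

lemma level_eq:
  fixes \<mu> \<nu> :: "'n::finite \<Rightarrow> nat"
  assumes "herm_eig \<mu> \<in> {real k..<real k + 1}" "herm_eig \<nu> \<in> {real k..<real k + 1}"
  shows "mi_abs \<mu> = mi_abs \<nu>"
proof -
  have "\<bar>2 * real (mi_abs \<mu>) - 2 * real (mi_abs \<nu>)\<bar> < 1"
    using assms unfolding herm_eig_def by auto
  then have "\<bar>int (mi_abs \<mu>) - int (mi_abs \<nu>)\<bar> < 1" by linarith
  then show ?thesis by simp
qed

theorem lemma4p10:
  fixes \<alpha> :: real
  assumes "\<alpha> \<ge> 0"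
  shows "\<exists>C>0. \<forall>(k::nat) (f :: real ^ 'n::finite \<Rightarrow> complex). f \<in> L2 \<longrightarrow>
           real k powr (\<alpha> / 4) * L2_norm (spec_proj {real k..<real k + 1} f)
             \<le> C * L2_weighted_norm \<alpha> (spec_proj {real k..<real k + 1} f)"
proof -
  define \<kappa> where "\<kappa> = kap \<alpha> (real CARD('n))"
  have kp: "\<kappa> > 0" unfolding \<kappa>_def by (rule kap_pos) simp
  define C where "C = 1 / sqrt \<kappa>"
  have Cp: "C > 0" unfolding C_def using kp by simp
  have "\<forall>(k::nat) (f :: real ^ 'n::finite \<Rightarrow> complex). f \<in> L2 \<longrightarrow>
           real k powr (\<alpha> / 4) * L2_norm (spec_proj {real k..<real k + 1} f)
             \<le> C * L2_weighted_norm \<alpha> (spec_proj {real k..<real k + 1} f)"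
  proof (intro allI impI)
    fix k :: nat and f :: "real ^ 'n \<Rightarrow> complex"
    define S where "S = {\<mu>::'n \<Rightarrow> nat. herm_eig \<mu> \<in> {real k..<real k + 1}}"
    define c where "c = herm_coeff f"
    have sp: "spec_proj {real k..<real k + 1} f = gS S c"
      unfolding spec_proj_def gS_def S_def c_def by (simp add: fun_eq_iff)
    have Wn: "L2_weighted_norm \<alpha> (gS S c) \<ge> 0" unfolding L2_weighted_norm_def by simp
    show "real k powr (\<alpha> / 4) * L2_norm (spec_proj {real k..<real k + 1} f)
             \<le> C * L2_weighted_norm \<alpha> (spec_proj {real k..<real k + 1} f)"
    proof (cases "finite S \<and> S \<noteq> {}")
      case False
      then have "gS S c = (\<lambda>x. 0)" unfolding gS_def by (auto simp: fun_eq_iff)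
      then have "L2_norm (gS S c) = 0" unfolding L2_norm_def by simp
      then show ?thesis unfolding sp using Wn Cp by simp
    next
      case True
      then obtain \<mu>0 where m0: "\<mu>0 \<in> S" by blast
      define m where "m = mi_abs \<mu>0"
      have lev: "mi_abs \<mu> = m" if "\<mu> \<in> S" for \<mu>
        unfolding m_def using that m0 unfolding S_def by (auto intro: level_eq)
      have fin: "finite S" using True by blast
      define N where "N = (\<Sum>\<mu>\<in>S. (cmod (c \<mu>))^2)"
      define L where "L = 2 * real m + real CARD('n)"
      define W where "W = (\<integral>x. (cmod (gS S c x))^2 * (1 + norm x) powr \<alpha> \<partial>lborel)"
      have N0: "N \<ge> 0" unfolding N_def by (intro sum_nonneg) auto
      have W0: "W \<ge> 0" unfolding W_def by (intro integral_nonneg_AE AE_I2) simp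
      have kL: "real k \<le> L"
        using m0 unfolding S_def L_def m_def herm_eig_def by auto
      have main: "\<kappa> * L powr (\<alpha>/2) * N \<le> W"
        unfolding \<kappa>_def L_def N_def W_def by (rule main_lower[OF assms fin lev])
      have L2n: "L2_norm (gS S c) = sqrt N"
        unfolding L2_norm_def N_def using M0(2)[OF fin lev] by simp
      have L2w: "L2_weighted_norm \<alpha> (gS S c) = sqrt W"
        unfolding L2_weighted_norm_def W_def by simp
      have kpow: "(real k powr (\<alpha> / 4))^2 = real k powr (\<alpha> / 2)"
        by (simp add: power2_eq_square powr_add[symmetric])
      have "(real k powr (\<alpha> / 4) * sqrt N)^2 = real k powr (\<alpha> / 2) * N"
        using N0 by (simp add: power_mult_distrib kpow)
      also have "\<dots> \<le> L powr (\<alpha> / 2) * N"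
        by (intro mult_right_mono powr_mono2 N0 kL) (use assms in auto)
      also have "\<dots> \<le> W / \<kappa>" using main kp by (simp add: field_simps)
      also have "\<dots> = (C * sqrt W)^2" unfolding C_def using kp W0 by (simp add: power_mult_distrib power_divide)
      finally have sq: "(real k powr (\<alpha> / 4) * sqrt N)^2 \<le> (C * sqrt W)^2" .
      have "real k powr (\<alpha> / 4) * sqrt N \<le> C * sqrt W"
        by (rule power2_le_imp_le[OF sq]) (use Cp W0 in simp)
      then show ?thesis unfolding sp L2n L2w .
    qed
  qed
  then show ?thesis using Cp by blast
qed

end
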